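(* Let $q$ be an odd prime power, $n=\frac{q+1}{2}$ and $\delta$ an integer with $2\leq\delta\leq\lfloor\frac{q+3}{4}\rfloor$. Then the negacyclic BCH code $\mathcal{C}_{(q,n,\delta,0)}$ has parameters $[n,n-2(\delta-1),2\delta-1]$. All of these codes are MDS.
   Context: Let $\ell$ be the order of $q$ modulo $2n$, $\alpha$ a primitive element of $\mathrm{GF}(q^\ell)$, $\beta=\alpha^{(q^\ell-1)/(2n)}$ (a primitive $2n$-th root of unity), and $\mathbb{M}_{\beta^j}(x)$ the minimal polynomial of $\beta^j$ over $\mathrm{GF}(q)$. For $2\leq\delta\leq n$, $\mathcal{C}_{(q,n,\delta,0)}$ is the negacyclic code of length $n$ over $\mathrm{GF}(q)$ (ideal of $\mathrm{GF}(q)[x]/(x^n+1)$) generated by $\mathrm{lcm}\big(\mathbb{M}_{\beta^{1}}(x),\mathbb{M}_{\beta^{3}}(x),\ldots,\mathbb{M}_{\beta^{1+2(\delta-2)}}(x)\big)$. An $[n,k,d]$ code is MDS if $d=n-k+1$. *)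

theory Defs
  imports "HOL-Computational_Algebra.Polynomial_Factorial" "HOL-Library.Cardinality"
begin

definition mult_ord :: "nat \<Rightarrow> nat \<Rightarrow> nat" where
  "mult_ord m q = (if coprime m q then (LEAST d. d > 0 \<and> q ^ d mod m = 1 mod m) else 0)"

definition field_hom :: "('a::field \<Rightarrow> 'b::field) \<Rightarrow> bool" where
  "field_hom \<phi> \<longleftrightarrow> \<phi> 0 = 0 \<and> \<phi> 1 = 1 \<and> (\<forall>x y. \<phi> (x + y) = \<phi> x + \<phi> y) \<and>
     (\<forall>x y. \<phi> (x * y) = \<phi> x * \<phi> y)"

definition primitive_element :: "'b::field \<Rightarrow> bool" where
  "primitive_element \<alpha> \<longleftrightarrow> \<alpha> \<noteq> 0 \<and> (\<forall>y. y \<noteq> 0 \<longrightarrow> (\<exists>k::nat. y = \<alpha> ^ k))"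

definition min_poly :: "('a::field \<Rightarrow> 'b::field) \<Rightarrow> 'b \<Rightarrow> 'a poly" where
  "min_poly \<phi> x = (THE m. lead_coeff m = 1 \<and> poly (map_poly \<phi> m) x = 0 \<and>
      (\<forall>m'. m' \<noteq> 0 \<and> poly (map_poly \<phi> m') x = 0 \<longrightarrow> degree m \<le> degree m'))"

text \<open>Negacyclic BCH code C_(q,n,delta,0): the ideal of GF(q)[x]/(x^n+1) generated by
  lcm(M_{beta^1}, M_{beta^3}, ..., M_{beta^(1+2(delta-2))}); elements of the quotient
  ring are represented by their reduced representatives of degree < n (i.e. the
  coefficient vectors (c_0,...,c_{n-1})).\<close>
definition negacyclic_generator :: "('a::field_gcd \<Rightarrow> 'b::field) \<Rightarrow> 'b \<Rightarrow> nat \<Rightarrow> 'a poly" where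
  "negacyclic_generator \<phi> \<beta> \<delta> =
     Lcm ((\<lambda>i. min_poly \<phi> (\<beta> ^ (1 + 2 * i))) ` {0..\<delta> - 2})"

definition negacyclic_BCH :: "('a::field_gcd \<Rightarrow> 'b::field) \<Rightarrow> 'b \<Rightarrow> nat \<Rightarrow> nat \<Rightarrow> 'a poly set" where
  "negacyclic_BCH \<phi> \<beta> n \<delta> =
     {(a * negacyclic_generator \<phi> \<beta> \<delta>) mod (monom 1 n + 1) | a. True}"

definition hamming_dist :: "'a::zero poly \<Rightarrow> 'a poly \<Rightarrow> nat" where
  "hamming_dist c c' = card {i. coeff c i \<noteq> coeff c' i}"

definition min_dist :: "'a::zero poly set \<Rightarrow> nat" where
  "min_dist C = Min {hamming_dist c c' | c c'. c \<in> C \<and> c' \<in> C \<and> c \<noteq> c'}"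

definition code_dim :: "'a::field_gcd poly set \<Rightarrow> nat" where
  "code_dim C = vector_space.dim (smult :: 'a \<Rightarrow> 'a poly \<Rightarrow> 'a poly) C"

end

theory Submission
  imports Defs
begin


lemma fermat_field:
  fixes x :: "'k::{field,finite}"
  assumes "x \<noteq> 0"
  shows "x ^ (CARD('k) - 1) = 1"
proof -
  let ?U = "UNIV - {0::'k}"
  have fin: "finite ?U" by simp
  have bij: "bij_betw ((*) x) ?U ?U"
  proof (rule bij_betw_imageI)
    show "inj_on ((*) x) ?U" using assms by (auto simp: inj_on_def)
    show "(*) x ` ?U = ?U"
    proof
      show "(*) x ` ?U \<subseteq> ?U" using assms by auto
      show "?U \<subseteq> (*) x ` ?U"
      proof
        fix y assume "y \<in> ?U"
        hence "inverse x * y \<in> ?U" "y = x * (inverse x * y)" using assms by (auto simp: field_simps)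
        thus "y \<in> (*) x ` ?U" by blast
      qed
    qed
  qed
  have "prod (\<lambda>y. x * y) ?U = prod id ?U"
    using prod.reindex_bij_betw[OF bij, of id] by simp
  moreover have "prod (\<lambda>y. x * y) ?U = x ^ card ?U * prod id ?U"
    by (simp add: prod.distrib)
  moreover have "prod id ?U \<noteq> 0" by simp
  moreover have "card ?U = CARD('k) - 1" by (simp add: card_Diff_singleton)
  ultimately show ?thesis by simp
qed

lemma fermat_field':
  fixes x :: "'k::{field,finite}"
  shows "x ^ CARD('k) = x"
proof (cases "x = 0")
  case True thus ?thesis by simp
next
  case False
  have "CARD('k) = Suc (CARD('k) - 1)" using finite_UNIV_card_ge_0[where 'a='k] by simp
  hence "x ^ CARD('k) = x * x ^ (CARD('k) - 1)" by (metis power_Suc)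
  thus ?thesis using fermat_field[OF False] by simp
qed


context
  fixes \<phi> :: "'a::field \<Rightarrow> 'b::field"
  assumes fh: "field_hom \<phi>"
begin

lemma h0[simp]: "\<phi> 0 = 0" and h1[simp]: "\<phi> 1 = 1"
  and hadd[simp]: "\<phi> (x + y) = \<phi> x + \<phi> y" and hmult[simp]: "\<phi> (x * y) = \<phi> x * \<phi> y"
  using fh by (auto simp: field_hom_def)

lemma hminus[simp]: "\<phi> (- x) = - \<phi> x"
proof -
  have "\<phi> (- x) + \<phi> x = 0" by (metis hadd h0 add.left_inverse)
  thus ?thesis by (simp add: eq_neg_iff_add_eq_0)
qed

lemma hdiff[simp]: "\<phi> (x - y) = \<phi> x - \<phi> y"
  by (metis diff_conv_add_uminus hadd hminus)

lemma hzero_iff[simp]: "\<phi> x = 0 \<longleftrightarrow> x = 0"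
proof
  assume "\<phi> x = 0"
  show "x = 0"
  proof (rule ccontr)
    assume "x \<noteq> 0"
    hence "\<phi> (x * inverse x) = 1" by simp
    thus False using \<open>\<phi> x = 0\<close> by simp
  qed
qed simp

lemma hinj: "inj \<phi>"
  by (rule injI) (metis hdiff hzero_iff eq_iff_diff_eq_0)

lemma hpower[simp]: "\<phi> (x ^ k) = \<phi> x ^ k"
  by (induction k) auto

lemma hof_nat[simp]: "\<phi> (of_nat k) = of_nat k"
  by (induction k) auto

lemma hsum: "\<phi> (sum f A) = sum (\<lambda>x. \<phi> (f x)) A"
  by (induction A rule: infinite_finite_induct) auto

lemma hdivide[simp]: "\<phi> (x / y) = \<phi> x / \<phi> y"
proof (cases "y = 0")
  case False
  have "\<phi> (x / y) * \<phi> y = \<phi> x" using False by (metis hmult nonzero_divide_eq_eq)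
  thus ?thesis using False by (simp add: eq_divide_eq)
qed simp

lemma mp_coeff[simp]: "coeff (map_poly \<phi> p) k = \<phi> (coeff p k)"
  by (simp add: coeff_map_poly)

lemma mp_degree[simp]: "degree (map_poly \<phi> p) = degree p"
  by (rule degree_map_poly) simp

lemma mp_add[simp]: "map_poly \<phi> (p + r) = map_poly \<phi> p + map_poly \<phi> r"
  by (rule poly_eqI) simp

lemma mp_minus[simp]: "map_poly \<phi> (- p) = - map_poly \<phi> p"
  by (rule poly_eqI) simp

lemma mp_diff[simp]: "map_poly \<phi> (p - r) = map_poly \<phi> p - map_poly \<phi> r"
  by (rule poly_eqI) simp

lemma mp_mult[simp]: "map_poly \<phi> (p * r) = map_poly \<phi> p * map_poly \<phi> r"
  by (rule poly_eqI) (simp add: coeff_mult hsum)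

lemma mp_eq0[simp]: "map_poly \<phi> p = 0 \<longleftrightarrow> p = 0"
  by (metis mp_degree mp_coeff hzero_iff leading_coeff_0_iff)

lemma mp_pCons[simp]: "map_poly \<phi> (pCons a p) = pCons (\<phi> a) (map_poly \<phi> p)"
  by (rule poly_eqI) (simp add: coeff_pCons split: nat.splits)

lemma mp_one[simp]: "map_poly \<phi> 1 = 1" by simp

lemma mp_monom[simp]: "map_poly \<phi> (monom c k) = monom (\<phi> c) k"
  by (simp add: map_poly_monom)

lemma mp_dvd: "p dvd r \<Longrightarrow> map_poly \<phi> p dvd map_poly \<phi> r"
  by (metis dvdE dvdI mp_mult)

lemma mp_dvd_rev:
  assumes "p \<noteq> 0" "map_poly \<phi> p dvd map_poly \<phi> r"
  shows "p dvd r"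
proof -
  have r: "r = p * (r div p) + r mod p" by simp
  hence "map_poly \<phi> r = map_poly \<phi> p * map_poly \<phi> (r div p) + map_poly \<phi> (r mod p)"
    by (metis mp_add mp_mult)
  hence "map_poly \<phi> p dvd map_poly \<phi> (r mod p)"
    using assms(2) by (metis dvd_add_right_iff dvd_triv_left)
  moreover have "r mod p = 0 \<or> degree (r mod p) < degree p"
    using assms(1) degree_mod_less by blast
  ultimately have "r mod p = 0"
    by (metis mp_degree mp_eq0 dvd_imp_degree_le not_le)
  thus ?thesis by (simp add: mod_eq_0_iff_dvd)
qed

end


lemma binom_expand:
  fixes x y :: "'k::comm_ring_1"
  assumes "Q \<ge> 1"
  shows "(x + y) ^ Q = x ^ Q + y ^ Q + (\<Sum>j\<in>{1..<Q}. of_nat (Q choose j) * x ^ j * y ^ (Q - j))"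
proof -
  have "{..Q} = insert 0 (insert Q {1..<Q})" using assms by auto
  hence "(x + y) ^ Q = (\<Sum>j\<in>insert 0 (insert Q {1..<Q}). of_nat (Q choose j) * x ^ j * y ^ (Q - j))"
    by (simp add: binomial_ring)
  also have "\<dots> = y ^ Q + (x ^ Q + (\<Sum>j\<in>{1..<Q}. of_nat (Q choose j) * x ^ j * y ^ (Q - j)))"
    using assms by (subst sum.insert; simp)+
  finally show ?thesis by (simp add: algebra_simps)
qed

lemma binom_vanish:
  assumes "0 < k" "k < CARD('k::{field,finite})"
  shows "(of_nat (CARD('k) choose k) :: 'k) = 0"
proof -
  define Q where "Q = CARD('k)"
  have Q1: "Q \<ge> 1" unfolding Q_def using finite_UNIV_card_ge_0[where 'a='k] by simp
  define R :: "'k poly" where "R = (\<Sum>j\<in>{1..<Q}. monom (of_nat (Q choose j)) j)"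
  have "poly R x = 0" for x
  proof -
    have "poly R x = (\<Sum>j\<in>{1..<Q}. of_nat (Q choose j) * x ^ j)"
      unfolding R_def by (simp add: poly_sum poly_monom)
    also have "\<dots> = (x + 1) ^ Q - x ^ Q - 1"
      using binom_expand[OF Q1, of x 1] by simp
    also have "\<dots> = 0" unfolding Q_def by (simp add: fermat_field')
    finally show ?thesis .
  qed
  moreover have "degree R \<le> Q - 1"
    unfolding R_def by (rule degree_sum_le) (auto intro: order.trans[OF degree_monom_le])
  ultimately have "R = 0"
  proof -
    assume r0: "\<And>x. poly R x = 0" and dg: "degree R \<le> Q - 1"
    show "R = 0"
    proof (rule ccontr)
      assume "R \<noteq> 0"
      hence "card {x. poly R x = 0} \<le> degree R" by (rule card_poly_roots_bound)
      moreover have "{x. poly R x = 0} = UNIV" using r0 by auto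
      ultimately show False using dg Q1 unfolding Q_def by simp
    qed
  qed
  hence "coeff R k = 0" by simp
  moreover have "coeff R k = of_nat (Q choose k)"
    unfolding R_def coeff_sum using assms unfolding Q_def[symmetric]
    by (simp add: coeff_monom sum.delta)
  ultimately show ?thesis unfolding Q_def by simp
qed

lemma frobenius:
  fixes \<phi> :: "'a::{field,finite} \<Rightarrow> 'b::field"
  assumes fh: "field_hom \<phi>"
  shows "((x::'b) + y) ^ CARD('a) = x ^ CARD('a) + y ^ CARD('a)"
proof -
  have Q1: "CARD('a) \<ge> 1" using finite_UNIV_card_ge_0[where 'a='a] by simp
  have "(of_nat (CARD('a) choose j) :: 'b) = 0" if "j \<in> {1..<CARD('a)}" for j
  proof -
    have "(of_nat (CARD('a) choose j) :: 'b) = \<phi> (of_nat (CARD('a) choose j))"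
      using hof_nat[OF fh] by simp
    also have "\<dots> = 0" using binom_vanish[of j, where 'k='a] that h0[OF fh] by simp
    finally show ?thesis .
  qed
  thus ?thesis using binom_expand[OF Q1, of x y] by simp
qed


lemma pow_mod_period:
  fixes a :: "'k::monoid_mult"
  assumes "a ^ r = 1"
  shows "a ^ k = a ^ (k mod r)"
proof -
  have "a ^ k = a ^ (r * (k div r) + k mod r)" by simp
  also have "\<dots> = (a ^ r) ^ (k div r) * a ^ (k mod r)" by (simp only: power_add power_mult)
  finally show ?thesis using assms by simp
qed

lemma primitive_order:
  fixes \<alpha> :: "'k::{field,finite}"
  assumes "primitive_element \<alpha>"
  shows "\<alpha> ^ m = 1 \<longleftrightarrow> (CARD('k) - 1) dvd m"
proof
  have a0: "\<alpha> \<noteq> 0" using assms by (simp add: primitive_element_def)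
  assume "(CARD('k) - 1) dvd m"
  then obtain t where "m = (CARD('k) - 1) * t" by blast
  hence "\<alpha> ^ m = (\<alpha> ^ (CARD('k) - 1)) ^ t" by (simp only: power_mult)
  thus "\<alpha> ^ m = 1" by (simp only: fermat_field[OF a0] power_one)
next
  have a0: "\<alpha> \<noteq> 0" using assms by (simp add: primitive_element_def)
  assume am: "\<alpha> ^ m = 1"
  define r where "r = m mod (CARD('k) - 1)"
  have ar: "\<alpha> ^ r = 1"
    using pow_mod_period[of \<alpha> "CARD('k) - 1" m] fermat_field[OF a0] am r_def by simp
  show "(CARD('k) - 1) dvd m"
  proof (rule ccontr)
    assume "\<not> (CARD('k) - 1) dvd m"
    have c2: "card {0::'k, 1} \<le> CARD('k)" by (rule card_mono) auto
    hence c2': "CARD('k) - 1 > 0" by simp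
    have rpos: "r > 0" unfolding r_def using \<open>\<not> (CARD('k) - 1) dvd m\<close>
      by (simp add: mod_greater_zero_iff_not_dvd)
    have rlt: "r < CARD('k) - 1" unfolding r_def using c2' by (rule mod_less_divisor)
    have "UNIV - {0} \<subseteq> (\<lambda>j. \<alpha> ^ j) ` {..<r}"
    proof
      fix y :: 'k assume "y \<in> UNIV - {0}"
      then obtain k where "y = \<alpha> ^ k" using assms by (auto simp: primitive_element_def)
      hence "y = \<alpha> ^ (k mod r)" using pow_mod_period[OF ar] by simp
      thus "y \<in> (\<lambda>j. \<alpha> ^ j) ` {..<r}" using rpos by auto
    qed
    hence "card (UNIV - {0::'k}) \<le> card ((\<lambda>j. \<alpha> ^ j) ` {..<r})" by (intro card_mono) auto
    also have "\<dots> \<le> r" using card_image_le[of "{..<r}" "\<lambda>j. \<alpha> ^ j"] by simp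
    finally show False using rlt by (simp add: card_Diff_singleton)
  qed
qed

lemma arith1: "odd (q::nat) \<Longrightarrow> 2 \<le> (\<delta>::nat) \<Longrightarrow> \<delta> \<le> (q + 3) div 4 \<Longrightarrow> q \<ge> 5"
  by presburger
lemma arith2: "odd (q::nat) \<Longrightarrow> n = (q+1) div 2 \<Longrightarrow> 2 * n = q + 1"
  by presburger
lemma arith3: "odd (q::nat) \<Longrightarrow> n = (q+1) div 2 \<Longrightarrow> 2 \<le> (\<delta>::nat) \<Longrightarrow> \<delta> \<le> (q + 3) div 4 \<Longrightarrow> 2 * \<delta> - 1 \<le> n"
  by presburger

locale bch =
  fixes q n \<delta> :: nat and \<phi> :: "'a::{field_gcd,finite} \<Rightarrow> 'b::{field,finite}"
    and \<alpha> \<beta> :: 'b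
  assumes cardA: "CARD('a) = q" and oddq: "odd q"
    and ndef: "n = (q + 1) div 2"
    and d2: "2 \<le> \<delta>" and dq: "\<delta> \<le> (q + 3) div 4"
    and cardB0: "CARD('b) = q ^ mult_ord (2 * n) q"
    and fh: "field_hom \<phi>"
    and prim: "primitive_element \<alpha>"
    and beta0: "\<beta> = \<alpha> ^ ((q ^ mult_ord (2 * n) q - 1) div (2 * n))"
begin

lemma q5: "q \<ge> 5" using arith1[OF oddq d2 dq] .
lemma twon: "2 * n = q + 1" using arith2[OF oddq ndef] .
lemma dn: "2 * \<delta> - 1 \<le> n" using arith3[OF oddq ndef d2 dq] .

lemma ell: "mult_ord (2 * n) q = 2"
proof -
  have cop: "coprime (2 * n) q" unfolding twon by (simp add: coprime_Suc_left_nat)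
  have sq: "q ^ 2 mod (q + 1) = 1"
  proof -
    have e: "q ^ 2 = 1 + (q + 1) * (q - 1)" using q5 by (simp add: power2_eq_square algebra_simps)
    have "q ^ 2 mod (q + 1) = (1 + (q + 1) * (q - 1)) mod (q + 1)" by (simp only: e)
    hence "q ^ 2 mod (q + 1) = 1 mod (q + 1)" by (simp only: mod_mult_self2)
    thus ?thesis using q5 by simp
  qed
  have "(LEAST d. d > 0 \<and> q ^ d mod (2 * n) = 1 mod (2 * n)) = 2"
  proof (rule Least_equality)
    show "2 > (0::nat) \<and> q ^ 2 mod (2 * n) = 1 mod (2 * n)" using sq q5 twon by simp
    fix d assume d: "d > 0 \<and> q ^ d mod (2 * n) = 1 mod (2 * n)"
    show "2 \<le> d"
    proof (rule ccontr)
      assume "\<not> 2 \<le> d" hence "d = 1" using d by simp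
      thus False using d q5 twon by simp
    qed
  qed
  thus ?thesis using cop by (simp add: mult_ord_def)
qed

lemma cardB: "CARD('b) = q ^ 2" using cardB0 ell by simp

lemma beta_def: "\<beta> = \<alpha> ^ (q - 1)"
proof -
  have "q ^ 2 - 1 = (q + 1) * (q - 1)" using q5 by (simp add: power2_eq_square algebra_simps)
  hence "(q ^ 2 - 1) div (2 * n) = ((q + 1) * (q - 1)) div (q + 1)" by (simp only: twon)
  moreover have "((q + 1) * (q - 1)) div (q + 1) = q - 1" by (rule nonzero_mult_div_cancel_left) simp
  ultimately have "(q ^ 2 - 1) div (2 * n) = q - 1" by simp
  thus ?thesis using beta0 ell by simp
qed

lemma beta_one: "\<beta> ^ j = 1 \<longleftrightarrow> (2 * n) dvd j"
proof -
  have e: "q ^ 2 - 1 = (q - 1) * (q + 1)" using q5 by (simp add: power2_eq_square algebra_simps)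
  have "\<beta> ^ j = 1 \<longleftrightarrow> (q ^ 2 - 1) dvd ((q - 1) * j)"
    using primitive_order[OF prim, of "(q - 1) * j"] cardB by (simp add: beta_def power_mult)
  also have "\<dots> \<longleftrightarrow> (q - 1) * (q + 1) dvd (q - 1) * j" by (simp only: e)
  also have "\<dots> \<longleftrightarrow> (q + 1) dvd j" using q5 by (intro nat_mult_dvd_cancel1) simp
  finally show ?thesis using twon by simp
qed

lemma beta_nz[simp]: "\<beta> \<noteq> 0"
proof
  assume "\<beta> = 0"
  moreover have "2 * n > 0" using twon by simp
  ultimately have "\<beta> ^ (2 * n) = 0" using zero_power[of "2*n", where 'a='b] by simp
  moreover have "\<beta> ^ (2 * n) = 1" using beta_one by simp
  ultimately show False by simp
qed

lemma beta_period: "\<beta> ^ k = \<beta> ^ (k mod (2 * n))"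
  by (rule pow_mod_period) (simp add: beta_one)

lemma beta_inj:
  assumes "a \<le> b" "b < a + 2 * n" "\<beta> ^ a = \<beta> ^ b"
  shows "a = b"
proof -
  have "\<beta> ^ b = \<beta> ^ (a + (b - a))" using assms(1) by simp
  also have "\<dots> = \<beta> ^ a * \<beta> ^ (b - a)" by (rule power_add)
  finally have "\<beta> ^ b = \<beta> ^ a * \<beta> ^ (b - a)" .
  hence "\<beta> ^ (b - a) = 1" using assms(3) by simp
  hence "(2 * n) dvd (b - a)" using beta_one by simp
  moreover have "b - a < 2 * n" using assms(1,2) by linarith
  ultimately have "b - a = 0" using nat_dvd_not_less[of "b - a" "2*n"] by (cases "b - a = 0") auto
  thus ?thesis using assms(1) by simp
qed

lemma beta_n: "\<beta> ^ n = -1"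
proof -
  have "\<beta> ^ (2 * n) = \<beta> ^ n * \<beta> ^ n" by (simp only: mult_2 power_add)
  hence "(\<beta> ^ n - 1) * (\<beta> ^ n + 1) = \<beta> ^ (2 * n) - 1"
    by (simp add: algebra_simps)
  also have "\<dots> = 0" using beta_one by simp
  finally have "\<beta> ^ n - 1 = 0 \<or> \<beta> ^ n + 1 = 0" by simp
  moreover have "\<beta> ^ n \<noteq> 1" using beta_one twon q5 by (simp add: nat_dvd_not_less)
  ultimately show ?thesis by (simp add: add_eq_0_iff2)
qed

lemma frob: "(x + y) ^ q = x ^ q + (y::'b) ^ q"
  using frobenius[OF fh, of x y] unfolding cardA .

lemma fix_image: "(y::'b) ^ q = y \<Longrightarrow> \<exists>c. y = \<phi> c"
proof -
  assume y: "y ^ q = y"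
  let ?F = "{z::'b. z ^ q = z}"
  have img: "range \<phi> \<subseteq> ?F"
  proof
    fix z assume "z \<in> range \<phi>"
    then obtain c where c: "z = \<phi> c" by auto
    have "\<phi> c ^ q = \<phi> (c ^ q)" using hpower[OF fh] by simp
    also have "\<dots> = \<phi> c" using fermat_field'[of c] cardA by simp
    finally show "z \<in> ?F" using c by simp
  qed
  define P :: "'b poly" where "P = monom 1 q - monom 1 1"
  have FP: "?F = {z. poly P z = 0}" by (auto simp: poly_monom P_def)
  have P0: "P \<noteq> 0"
  proof
    assume "P = 0"
    hence "coeff P q = (0::'b)" by simp
    thus False using q5 by (simp add: P_def coeff_monom)
  qed
  have Pd: "degree P \<le> q"
    unfolding P_def using q5 by (intro degree_diff_le) (auto simp: degree_monom_eq)
  have cF: "card ?F \<le> q" unfolding FP using card_poly_roots_bound[OF P0] Pd by linarith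
  have cR: "card (range \<phi>) = q" using card_image[OF hinj[OF fh]] cardA by simp
  have fF: "finite ?F" by simp
  have "card ?F \<le> card (range \<phi>)" using cF cR by simp
  hence "range \<phi> = ?F" by (rule card_seteq[OF fF img])
  hence "y \<in> range \<phi>" using y by blast
  thus ?thesis by blast
qed

end


lemma poly_as_sum:
  fixes p :: "'k::comm_semiring_1 poly"
  assumes "degree p < N"
  shows "poly p x = (\<Sum>i<N. coeff p i * x ^ i)"
proof -
  have "poly p x = (\<Sum>i\<le>degree p. coeff p i * x ^ i)" by (rule poly_altdef)
  also have "\<dots> = (\<Sum>i<N. coeff p i * x ^ i)"
    using assms by (intro sum.mono_neutral_left) (auto simp: coeff_eq_0)
  finally show ?thesis .
qed

context bch begin

lemmas hs[simp] = h0[OF fh] h1[OF fh] hadd[OF fh] hmult[OF fh] hminus[OF fh] hdiff[OF fh]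
  hzero_iff[OF fh] hpower[OF fh] hof_nat[OF fh] hdivide[OF fh] mp_coeff[OF fh] mp_degree[OF fh]
  mp_add[OF fh] mp_minus[OF fh] mp_diff[OF fh] mp_mult[OF fh] mp_eq0[OF fh] mp_pCons[OF fh]
  mp_monom[OF fh]

lemma phi_fix: "\<phi> c ^ q = \<phi> c"
proof -
  have "\<phi> c ^ q = \<phi> (c ^ q)" using hpower[OF fh] by simp
  also have "\<dots> = \<phi> c" using fermat_field'[of c] cardA by simp
  finally show ?thesis .
qed

lemma beta_qq: "\<beta> ^ (i * q * q) = \<beta> ^ i"
proof -
  have e: "q * q = 1 + (q + 1) * (q - 1)" using q5 by (simp add: algebra_simps)
  have "\<beta> ^ (i * q * q) = \<beta> ^ (i * (q * q))" by (simp add: mult.assoc)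
  also have "\<dots> = \<beta> ^ i * \<beta> ^ ((q + 1) * (i * (q - 1)))"
    by (simp only: e distrib_left power_add mult_1_right mult.left_commute)
  also have "\<beta> ^ ((q + 1) * (i * (q - 1))) = 1"
    by (rule beta_one[THEN iffD2]) (simp only: twon dvd_triv_left)
  finally show ?thesis by simp
qed

lemma beta_q1: "\<beta> ^ i * \<beta> ^ (i * q) = 1"
proof -
  have "\<beta> ^ i * \<beta> ^ (i * q) = \<beta> ^ ((q + 1) * i)" by (simp add: power_add[symmetric] algebra_simps)
  also have "\<dots> = 1" by (rule beta_one[THEN iffD2]) (simp only: twon dvd_triv_left)
  finally show ?thesis .
qed

lemma notfix:
  assumes "0 < i" "i < n"
  shows "(\<beta> ^ i) ^ q \<noteq> \<beta> ^ i"
proof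
  assume h: "(\<beta> ^ i) ^ q = \<beta> ^ i"
  have "(\<beta> ^ i) ^ q = \<beta> ^ (i * q)" by (simp add: power_mult)
  hence "\<beta> ^ i * \<beta> ^ i = 1" using beta_q1[of i] h by simp
  hence "\<beta> ^ (2 * i) = 1" by (simp add: mult_2 power_add)
  hence "2 * n dvd 2 * i" using beta_one by simp
  hence "n dvd i" by simp
  thus False using assms nat_dvd_not_less by blast
qed

lemma notimg:
  assumes "0 < i" "i < n"
  shows "\<beta> ^ i \<noteq> \<phi> c"
  using notfix[OF assms] phi_fix by metis

definition cq :: "nat \<Rightarrow> 'a" where "cq i = (SOME c. \<phi> c = \<beta> ^ i + \<beta> ^ (i * q))"

lemma cq_spec: "\<phi> (cq i) = \<beta> ^ i + \<beta> ^ (i * q)"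
proof -
  have "(\<beta> ^ i + \<beta> ^ (i * q)) ^ q = (\<beta> ^ i) ^ q + (\<beta> ^ (i * q)) ^ q" by (rule frob)
  also have "\<dots> = \<beta> ^ (i * q) + \<beta> ^ i" using beta_qq[of i] by (simp add: power_mult)
  finally have "(\<beta> ^ i + \<beta> ^ (i * q)) ^ q = \<beta> ^ i + \<beta> ^ (i * q)" by (simp add: add.commute)
  then obtain c where "\<beta> ^ i + \<beta> ^ (i * q) = \<phi> c" using fix_image by blast
  hence "\<exists>c. \<phi> c = \<beta> ^ i + \<beta> ^ (i * q)" by metis
  thus ?thesis unfolding cq_def by (rule someI_ex)
qed

definition Qp :: "nat \<Rightarrow> 'a poly" where "Qp i = [:1, - cq i, 1:]"

lemma Qp_deg[simp]: "degree (Qp i) = 2" by (simp add: Qp_def)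
lemma Qp_lead: "lead_coeff (Qp i) = 1" by (simp add: Qp_def)
lemma Qp_nz[simp]: "Qp i \<noteq> 0" by (simp add: Qp_def)

lemma mapQ: "map_poly \<phi> (Qp i) = [: - (\<beta> ^ i), 1:] * [: - (\<beta> ^ (i * q)), 1:]"
  using beta_q1[of i] by (simp add: Qp_def cq_spec algebra_simps)


lemma poly_mapQ: "poly (map_poly \<phi> (Qp i)) (\<beta> ^ i) = 0"
  "poly (map_poly \<phi> (Qp i)) (\<beta> ^ (i * q)) = 0"
  by (simp_all add: mapQ)

lemma deg2:
  assumes "0 < i" "i < n" "m \<noteq> 0" "poly (map_poly \<phi> m) (\<beta> ^ i) = 0"
  shows "2 \<le> degree m"
proof (rule ccontr)
  assume "\<not> 2 \<le> degree m"
  hence dm: "degree (map_poly \<phi> m) < 2" by simp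
  have "poly (map_poly \<phi> m) (\<beta> ^ i) = (\<Sum>k<2. coeff (map_poly \<phi> m) k * (\<beta> ^ i) ^ k)"
    by (rule poly_as_sum[OF dm])
  also have "\<dots> = \<phi> (coeff m 0) + \<phi> (coeff m 1) * \<beta> ^ i"
    by (simp add: numeral_2_eq_2)
  finally have e: "\<phi> (coeff m 0) + \<phi> (coeff m 1) * \<beta> ^ i = 0" using assms(4) by simp
  show False
  proof (cases "coeff m 1 = 0")
    case True
    hence "coeff m 0 = 0" using e by simp
    moreover have "degree m \<noteq> 1"
    proof
      assume "degree m = 1"
      hence "lead_coeff m = 0" using True by simp
      thus False using assms(3) by simp
    qed
    hence "degree m = 0" using \<open>\<not> 2 \<le> degree m\<close> by linarith
    ultimately show False using assms(3) leading_coeff_0_iff[of m] by simp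
  next
    case False
    have nz: "\<phi> (coeff m 1) \<noteq> 0" using False by simp
    have "\<phi> (coeff m 1) * \<beta> ^ i = - \<phi> (coeff m 0)" using e by (simp add: eq_neg_iff_add_eq_0 add.commute)
    have "\<beta> ^ i = (\<phi> (coeff m 1) * \<beta> ^ i) / \<phi> (coeff m 1)" using nz by simp
    also have "\<dots> = - \<phi> (coeff m 0) / \<phi> (coeff m 1)" using \<open>\<phi> (coeff m 1) * \<beta> ^ i = - \<phi> (coeff m 0)\<close> by simp
    finally have "\<beta> ^ i = - \<phi> (coeff m 0) / \<phi> (coeff m 1)" .
    hence "\<beta> ^ i = \<phi> (- coeff m 0 / coeff m 1)" by simp
    thus False using notimg[OF assms(1,2)] by blast
  qed
qed

lemma minpoly:
  assumes "0 < i" "i < n"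
  shows "min_poly \<phi> (\<beta> ^ i) = Qp i"
  unfolding min_poly_def
proof (rule the_equality)
  show "lead_coeff (Qp i) = 1 \<and> poly (map_poly \<phi> (Qp i)) (\<beta> ^ i) = 0 \<and>
      (\<forall>m'. m' \<noteq> 0 \<and> poly (map_poly \<phi> m') (\<beta> ^ i) = 0 \<longrightarrow> degree (Qp i) \<le> degree m')"
    using Qp_lead poly_mapQ deg2[OF assms] by auto
next
  fix m assume m: "lead_coeff m = 1 \<and> poly (map_poly \<phi> m) (\<beta> ^ i) = 0 \<and>
      (\<forall>m'. m' \<noteq> 0 \<and> poly (map_poly \<phi> m') (\<beta> ^ i) = 0 \<longrightarrow> degree m \<le> degree m')"
  have m0: "m \<noteq> 0" using m by auto
  have "\<forall>m'. m' \<noteq> 0 \<and> poly (map_poly \<phi> m') (\<beta> ^ i) = 0 \<longrightarrow> degree m \<le> degree m'"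
    using m by blast
  hence "degree m \<le> degree (Qp i)" using Qp_nz[of i] poly_mapQ(1)[of i] by blast
  hence "degree m \<le> 2" by simp
  moreover have "2 \<le> degree m" using deg2[OF assms m0] m by simp
  ultimately have dm: "degree m = 2" by simp
  define d where "d = m - Qp i"
  have c2: "coeff d 2 = 0" using m dm Qp_lead unfolding d_def by simp
  have dd: "degree d \<le> 2" unfolding d_def using dm by (intro degree_diff_le) auto
  have rd: "poly (map_poly \<phi> d) (\<beta> ^ i) = 0" using m poly_mapQ unfolding d_def by simp
  show "m = Qp i"
  proof (rule ccontr)
    assume "m \<noteq> Qp i"
    hence d0: "d \<noteq> 0" unfolding d_def by simp
    have "2 \<le> degree d" by (rule deg2[OF assms d0 rd])
    hence "degree d = 2" using dd by simp
    thus False using c2 d0 by (metis leading_coeff_0_iff)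
  qed
qed

lemma Qp_dvd:
  assumes "odd i" "i < n"
  shows "Qp i dvd (monom 1 n + 1)"
proof (rule mp_dvd_rev[OF fh Qp_nz])
  define a where "a = \<beta> ^ i"
  define b where "b = \<beta> ^ (i * q)"
  have i0: "0 < i" using assms(1) by (cases i) auto
  have ab: "a \<noteq> b"
  proof
    assume "a = b"
    hence "(\<beta> ^ i) ^ q = \<beta> ^ i" unfolding a_def b_def by (simp add: power_mult)
    thus False using notfix[OF i0 assms(2)] by simp
  qed
  have oq: "odd (i * q)" using assms(1) oddq by simp
  let ?F = "map_poly \<phi> (monom 1 n + 1)"
  have Fx: "poly ?F x = x ^ n + 1" for x by (simp add: poly_monom)
  have pw: "(\<beta> ^ j) ^ n = (\<beta> ^ n) ^ j" for j by (simp only: power_mult[symmetric] mult.commute)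
  have "poly ?F a = 0" unfolding Fx a_def pw beta_n using assms(1) by simp
  then obtain h where h: "?F = [:- a, 1:] * h" using poly_eq_0_iff_dvd by (metis dvdE)
  have "poly ?F b = 0" unfolding Fx b_def pw beta_n using oq by simp
  hence "poly ([:- a, 1:] * h) b = 0" by (simp only: h)
  hence "(b - a) * poly h b = 0" by auto
  hence "poly h b = 0" using ab by simp
  then obtain h' where hh: "h = [:- b, 1:] * h'" using poly_eq_0_iff_dvd by (metis dvdE)
  have "?F = ([:- a, 1:] * [:- b, 1:]) * h'" by (simp only: h hh mult.assoc)
  moreover have "map_poly \<phi> (Qp i) = [:- a, 1:] * [:- b, 1:]" unfolding a_def b_def by (rule mapQ)
  ultimately show "map_poly \<phi> (Qp i) dvd ?F" by (metis dvd_triv_left)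
qed

end


context bch begin

abbreviation "I \<equiv> {0..\<delta> - 2}"
abbreviation "fpol \<equiv> (monom 1 n + 1 :: 'a poly)"
abbreviation "gen \<equiv> negacyclic_generator \<phi> \<beta> \<delta>"

lemma I_bound: "i \<in> I \<Longrightarrow> 1 + 2 * i < n" using dn d2 by auto

lemma gen_eq: "gen = Lcm ((\<lambda>i. Qp (1 + 2 * i)) ` I)"
  unfolding negacyclic_generator_def
  by (intro arg_cong[where f=Lcm] image_cong refl minpoly) (use dn d2 in auto)

lemma gen_nz: "gen \<noteq> 0"
  unfolding gen_eq by (subst Lcm_0_iff) auto

lemma Qp_dvd_gen: "i \<in> I \<Longrightarrow> Qp (1 + 2 * i) dvd gen"
  unfolding gen_eq by (rule dvd_Lcm) auto

lemma gen_dvd_f: "gen dvd fpol"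
  unfolding gen_eq by (rule Lcm_least) (use dn d2 in \<open>auto intro!: Qp_dvd\<close>)

lemma gen_deg_le: "degree gen \<le> 2 * (\<delta> - 1)"
proof -
  have "gen dvd (\<Prod>i\<in>I. Qp (1 + 2 * i))"
    unfolding gen_eq by (rule Lcm_least) auto
  moreover have "(\<Prod>i\<in>I. Qp (1 + 2 * i)) \<noteq> 0" by simp
  ultimately have "degree gen \<le> degree (\<Prod>i\<in>I. Qp (1 + 2 * i))" by (rule dvd_imp_degree_le)
  also have "\<dots> = (\<Sum>i\<in>I. degree (Qp (1 + 2 * i)))" by (rule degree_prod_eq_sum_degree) simp
  also have "\<dots> = 2 * (\<delta> - 1)" using d2 by simp
  finally show ?thesis .
qed

definition e0 :: nat where "e0 = 2 * n - (2 * \<delta> - 3)"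

lemma gen_roots:
  assumes "k < 2 * \<delta> - 2"
  shows "poly (map_poly \<phi> gen) (\<beta> ^ (e0 + 2 * k)) = 0"
proof (cases "k \<le> \<delta> - 2")
  case True
  define i where "i = \<delta> - 2 - k"
  define j where "j = 1 + 2 * i"
  have iI: "i \<in> I" unfolding i_def by simp
  have je: "e0 + 2 * k = 2 * n - j" unfolding e0_def j_def i_def using True d2 dn by auto
  have jl: "j < 2 * n" using I_bound[OF iI] unfolding j_def by simp
  have "\<beta> ^ j * \<beta> ^ (2 * n - j) = 1"
    using jl by (simp add: power_add[symmetric] beta_one)
  hence "\<beta> ^ (2 * n - j) = \<beta> ^ (j * q)" using beta_q1[of j] by (metis beta_nz power_not_zero mult_left_cancel)
  hence "poly (map_poly \<phi> (Qp j)) (\<beta> ^ (e0 + 2 * k)) = 0" using je poly_mapQ(2) by simp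
  moreover have "map_poly \<phi> (Qp j) dvd map_poly \<phi> gen"
    by (rule mp_dvd[OF fh]) (use Qp_dvd_gen[OF iI] j_def in simp)
  ultimately show ?thesis by (metis dvdE poly_mult mult_zero_left)
next
  case False
  define i where "i = k - (\<delta> - 1)"
  define j where "j = 1 + 2 * i"
  have iI: "i \<in> I" unfolding i_def using False assms by auto
  have je: "e0 + 2 * k = 2 * n + j" unfolding e0_def j_def i_def using False d2 dn by auto
  have "\<beta> ^ (e0 + 2 * k) = \<beta> ^ j" unfolding je by (simp add: power_add beta_one)
  hence "poly (map_poly \<phi> (Qp j)) (\<beta> ^ (e0 + 2 * k)) = 0" using poly_mapQ(1) by simp
  moreover have "map_poly \<phi> (Qp j) dvd map_poly \<phi> gen"
    by (rule mp_dvd[OF fh]) (use Qp_dvd_gen[OF iI] j_def in simp)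
  ultimately show ?thesis by (metis dvdE poly_mult mult_zero_left)
qed

lemma roots_inj: "inj_on (\<lambda>k. \<beta> ^ (e0 + 2 * k)) {..<2 * \<delta> - 2}"
proof -
  have *: "a = b" if "a \<le> b" "a < 2 * \<delta> - 2" "b < 2 * \<delta> - 2" "\<beta> ^ (e0 + 2 * a) = \<beta> ^ (e0 + 2 * b)" for a b
  proof -
    have "e0 + 2 * a = e0 + 2 * b"
      by (rule beta_inj) (use that dn in auto)
    thus ?thesis by simp
  qed
  show ?thesis unfolding inj_on_def
    by (metis * lessThan_iff nat_le_linear)
qed

lemma gen_deg: "degree gen = 2 * (\<delta> - 1)"
proof -
  let ?R = "(\<lambda>k. \<beta> ^ (e0 + 2 * k)) ` {..<2 * \<delta> - 2}"
  have "card ?R = 2 * \<delta> - 2" using card_image[OF roots_inj] by simp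
  moreover have "?R \<subseteq> {x. poly (map_poly \<phi> gen) x = 0}" using gen_roots by auto
  hence "card ?R \<le> card {x. poly (map_poly \<phi> gen) x = 0}" by (intro card_mono) auto
  moreover have "card {x. poly (map_poly \<phi> gen) x = 0} \<le> degree (map_poly \<phi> gen)"
    by (rule card_poly_roots_bound) (simp add: gen_nz)
  ultimately have "2 * \<delta> - 2 \<le> degree gen" by simp
  thus ?thesis using gen_deg_le by simp
qed

end


context bch begin

abbreviation "C \<equiv> negacyclic_BCH \<phi> \<beta> n \<delta>"

lemma n1: "n \<ge> 1" using dn d2 by simp

lemma deg_f: "degree fpol = n"
proof -
  have "degree (monom (1::'a) n) = n" by (simp add: degree_monom_eq)
  thus ?thesis using n1 by (subst degree_add_eq_left) auto
qed

lemma f_nz: "fpol \<noteq> 0" using deg_f n1 by auto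

lemma code_char: "C = {c. gen dvd c \<and> degree c < n}"
proof (intro set_eqI iffI)
  fix c assume "c \<in> C"
  then obtain a where c: "c = (a * gen) mod fpol" unfolding negacyclic_BCH_def by auto
  have "gen dvd c" unfolding c by (rule dvd_mod) (auto simp: gen_dvd_f)
  moreover have "degree c < n"
  proof (cases "c = 0")
    case False
    thus ?thesis unfolding c using degree_mod_less[OF f_nz] deg_f c by auto
  qed (use n1 in simp)
  ultimately show "c \<in> {c. gen dvd c \<and> degree c < n}" by simp
next
  fix c assume "c \<in> {c. gen dvd c \<and> degree c < n}"
  hence c: "gen dvd c" "degree c < n" by auto
  then obtain b where b: "c = gen * b" by blast
  have "c mod fpol = c" using c(2) deg_f by (intro mod_poly_less) simp
  hence "c = (b * gen) mod fpol" using b by (simp add: mult.commute)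
  thus "c \<in> C" unfolding negacyclic_BCH_def by blast
qed


lemma vs: "vector_space (smult :: 'a \<Rightarrow> 'a poly \<Rightarrow> 'a poly)"
  by unfold_locales (simp_all add: smult_add_right smult_add_left)

lemma code_dim_eq: "code_dim C = n - degree gen"
proof -
  interpret vs: vector_space "smult :: 'a \<Rightarrow> 'a poly \<Rightarrow> 'a poly" by (rule vs)
  define m where "m = n - degree gen"
  define bv where "bv = (\<lambda>k. gen * monom 1 k)"
  define B where "B = bv ` {..<m}"
  have gn: "gen \<noteq> 0" by (rule gen_nz)
  have dgn: "degree gen < n" using gen_deg dn d2 by simp
  have bvdeg: "degree (bv k) = degree gen + k" for k
    unfolding bv_def using gn by (simp add: degree_mult_eq degree_monom_eq)
  have injbv: "inj_on bv {..<m}"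
  proof (rule inj_onI)
    fix x y assume "bv x = bv y"
    hence "monom (1::'a) x = monom 1 y" unfolding bv_def using gn by simp
    thus "x = y" by (simp add: monom_eq_iff')
  qed
  have cardB: "card B = m" unfolding B_def using card_image[OF injbv] by simp
  have sub: "vs.subspace C"
    unfolding code_char
  proof (rule vs.subspaceI)
    show "0 \<in> {c. gen dvd c \<and> degree c < n}" using n1 by simp
    fix x y assume x: "x \<in> {c. gen dvd c \<and> degree c < n}" and y: "y \<in> {c. gen dvd c \<and> degree c < n}"
    have "degree (x + y) \<le> max (degree x) (degree y)" by (rule degree_add_le_max)
    thus "x + y \<in> {c. gen dvd c \<and> degree c < n}" using x y by auto
  next
    fix c x assume x: "x \<in> {c. gen dvd c \<and> degree c < n}"
    have "gen dvd smult c x" using x by (auto intro: dvd_smult)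
    moreover have "degree (smult c x) \<le> degree x" by (rule degree_smult_le)
    ultimately show "smult c x \<in> {c. gen dvd c \<and> degree c < n}" using x by auto
  qed
  have BC: "B \<subseteq> C"
  proof
    fix v assume "v \<in> B"
    then obtain k where k: "k < m" "v = bv k" unfolding B_def by auto
    have "degree v < n" using k bvdeg m_def dgn by simp
    moreover have "gen dvd v" unfolding k bv_def by simp
    ultimately show "v \<in> C" unfolding code_char by simp
  qed
  have CB: "C \<subseteq> vs.span B"
  proof
    fix c assume "c \<in> C"
    hence c: "gen dvd c" "degree c < n" unfolding code_char by auto
    then obtain b where b: "c = gen * b" by blast
    have db: "degree b < m"
    proof (cases "b = 0")
      case False
      have "degree c = degree gen + degree b" unfolding b using gn False by (rule degree_mult_eq)
      thus ?thesis using c(2) m_def by simp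
    qed (use m_def dgn in simp)
    have "b = (\<Sum>k<m. monom (coeff b k) k)"
    proof -
      have "(\<Sum>k\<le>m - 1. monom (coeff b k) k) = b" by (rule poly_as_sum_of_monoms') (use db in simp)
      moreover have "{..m - 1} = {..<m}" using db by auto
      ultimately show ?thesis by simp
    qed
    hence "c = gen * (\<Sum>k<m. monom (coeff b k) k)" using b by metis
    also have "\<dots> = (\<Sum>k<m. gen * monom (coeff b k) k)" by (rule sum_distrib_left)
    also have "\<dots> = (\<Sum>k<m. smult (coeff b k) (bv k))"
      unfolding bv_def by (intro sum.cong refl) (simp add: smult_monom mult_smult_right[symmetric])
    also have "\<dots> \<in> vs.span B"
      by (intro vs.span_sum vs.span_scale vs.span_base) (auto simp: B_def)
    finally show "c \<in> vs.span B" .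
  qed
  have spanB: "vs.span B = vs.span C"
  proof -
    have "vs.span B \<subseteq> C" by (rule vs.span_minimal[OF BC sub])
    moreover have sC: "vs.span C = C" using vs.span_eq_iff sub by blast
    ultimately have "vs.span B = C" using CB by blast
    thus ?thesis using sC by (simp only:)
  qed
  have fB: "finite B" unfolding B_def by simp
  have indep0: "\<forall>u. (\<Sum>v\<in>B. smult (u v) v) = 0 \<longrightarrow> (\<forall>v\<in>B. u v = 0)"
    proof -
    show "\<forall>u. (\<Sum>v\<in>B. smult (u v) v) = 0 \<longrightarrow> (\<forall>v\<in>B. u v = 0)"
    proof (intro allI impI ballI)
      fix u v assume s0: "(\<Sum>v\<in>B. smult (u v) v) = 0" and v: "v \<in> B"
      then obtain k where k: "k < m" "v = bv k" unfolding B_def by auto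
      have "(\<Sum>v\<in>B. smult (u v) v) = (\<Sum>j<m. smult (u (bv j)) (bv j))"
        unfolding B_def by (rule sum.reindex[OF injbv, unfolded comp_def])
      also have "\<dots> = gen * (\<Sum>j<m. monom (u (bv j)) j)"
        unfolding bv_def by (simp add: sum_distrib_left smult_monom mult_smult_right[symmetric])
      finally have "gen * (\<Sum>j<m. monom (u (bv j)) j) = 0" using s0 by simp
      hence "(\<Sum>j<m. monom (u (bv j)) j) = 0" using gn by simp
      hence "coeff (\<Sum>j<m. monom (u (bv j)) j) k = 0" by simp
      hence "u (bv k) = 0" using k by (simp add: coeff_sum coeff_monom)
      thus "u v = 0" using k by simp
    qed
  qed
  have indep: "vs.independent B" using vs.dependent_finite[OF fB] indep0 by blast
  have "vs.dim C = card B" using vs.dim_eq_card[OF spanB indep] .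
  thus ?thesis unfolding code_dim_def cardB m_def .
qed

end


lemma vandermonde_zero:
  fixes f a :: "'x \<Rightarrow> 'k::field"
  assumes fin: "finite S" and inj: "inj_on f S"
    and eqs: "\<forall>k<card S. (\<Sum>s\<in>S. a s * f s ^ k) = 0" and t: "t \<in> S"
  shows "a t = 0"
proof -
  define N where "N = card S"
  define L where "L = (\<Prod>s\<in>S - {t}. [:- f s, 1:])"
  have "degree L = (\<Sum>s\<in>S - {t}. degree [:- f s, 1:])"
    unfolding L_def by (rule degree_prod_eq_sum_degree) simp
  also have "\<dots> = card (S - {t})" by simp
  finally have dL0: "degree L = card S - 1" using fin t by (simp add: card_Diff_singleton)
  have "card S > 0" using fin t card_gt_0_iff by blast
  hence dL: "degree L < N" unfolding N_def using dL0 by simp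
  have "0 = (\<Sum>k<N. coeff L k * (\<Sum>s\<in>S. a s * f s ^ k))" using eqs unfolding N_def by simp
  also have "\<dots> = (\<Sum>k<N. \<Sum>s\<in>S. a s * (coeff L k * f s ^ k))"
    by (simp add: sum_distrib_left mult_ac)
  also have "\<dots> = (\<Sum>s\<in>S. \<Sum>k<N. a s * (coeff L k * f s ^ k))" by (rule sum.swap)
  also have "\<dots> = (\<Sum>s\<in>S. a s * poly L (f s))"
    by (simp add: sum_distrib_left poly_as_sum[OF dL])
  also have "\<dots> = a t * poly L (f t) + (\<Sum>s\<in>S - {t}. a s * poly L (f s))"
    by (rule sum.remove[OF fin t])
  also have "(\<Sum>s\<in>S - {t}. a s * poly L (f s)) = 0"
  proof (rule sum.neutral, rule ballI)
    fix s assume s: "s \<in> S - {t}"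
    have "[:- f s, 1:] dvd L" unfolding L_def using fin s by (intro dvd_prodI) auto
    hence "poly L (f s) = 0" by (simp add: poly_eq_0_iff_dvd)
    thus "a s * poly L (f s) = 0" by simp
  qed
  finally have "a t * poly L (f t) = 0" by simp
  moreover have "poly L (f t) \<noteq> 0"
  proof -
    have "poly L (f t) = (\<Prod>s\<in>S - {t}. f t - f s)" unfolding L_def by (simp add: poly_prod)
    moreover have "f t - f s \<noteq> 0" if "s \<in> S - {t}" for s
      using inj t that unfolding inj_on_def by auto
    ultimately show ?thesis using fin by simp
  qed
  ultimately show ?thesis by simp
qed

context bch begin

lemma bch_bound:
  assumes cC: "c \<in> C" and c0: "c \<noteq> 0"
  shows "2 * \<delta> - 1 \<le> card {i. coeff c i \<noteq> 0}"
proof (rule ccontr)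
  define S where "S = {i. coeff c i \<noteq> 0}"
  assume "\<not> 2 * \<delta> - 1 \<le> card {i. coeff c i \<noteq> 0}"
  hence cS: "card S < 2 * \<delta> - 1" unfolding S_def by simp
  have cc: "gen dvd c" "degree c < n" using cC unfolding code_char by auto
  have Sn: "S \<subseteq> {..<n}"
  proof
    fix i assume "i \<in> S"
    hence "i \<le> degree c" unfolding S_def using le_degree by blast
    thus "i \<in> {..<n}" using cc by simp
  qed
  have finS: "finite S" using Sn finite_subset by blast
  have tS: "degree c \<in> S" unfolding S_def using c0 by simp
  define f where "f s = \<beta> ^ (2 * s)" for s
  define a where "a s = \<phi> (coeff c s) * \<beta> ^ (e0 * s)" for s
  have injf: "inj_on f S"
  proof -
    have *: "x = y" if "x \<in> S" "y \<in> S" "x \<le> y" "f x = f y" for x y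
    proof -
      have "2 * x = 2 * y" by (rule beta_inj) (use that Sn f_def in auto)
      thus ?thesis by simp
    qed
    show ?thesis unfolding inj_on_def by (metis * nat_le_linear)
  qed
  have eqs: "\<forall>k<card S. (\<Sum>s\<in>S. a s * f s ^ k) = 0"
  proof (intro allI impI)
    fix k assume k: "k < card S"
    define y where "y = \<beta> ^ (e0 + 2 * k)"
    have "poly (map_poly \<phi> gen) y = 0" unfolding y_def by (rule gen_roots) (use k cS in simp)
    moreover have "map_poly \<phi> gen dvd map_poly \<phi> c" by (rule mp_dvd[OF fh cc(1)])
    ultimately have py: "poly (map_poly \<phi> c) y = 0" by (metis dvdE poly_mult mult_zero_left)
    have "poly (map_poly \<phi> c) y = (\<Sum>i<n. coeff (map_poly \<phi> c) i * y ^ i)"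
      by (rule poly_as_sum) (use cc in simp)
    also have "\<dots> = (\<Sum>i<n. \<phi> (coeff c i) * y ^ i)" by simp
    also have "\<dots> = (\<Sum>i\<in>S. \<phi> (coeff c i) * y ^ i)"
      by (rule sum.mono_neutral_right) (use Sn S_def in auto)
    also have "\<dots> = (\<Sum>s\<in>S. a s * f s ^ k)"
    proof (rule sum.cong[OF refl])
      fix s
      have "y ^ s = \<beta> ^ ((e0 + 2 * k) * s)" unfolding y_def by (rule power_mult[symmetric])
      also have "(e0 + 2 * k) * s = e0 * s + (2 * s) * k" by (simp add: algebra_simps)
      also have "\<beta> ^ (e0 * s + (2 * s) * k) = \<beta> ^ (e0 * s) * (\<beta> ^ (2 * s)) ^ k"
        by (simp only: power_add power_mult)
      finally show "\<phi> (coeff c s) * y ^ s = a s * f s ^ k" unfolding a_def f_def by (simp add: mult.assoc)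
    qed
    finally show "(\<Sum>s\<in>S. a s * f s ^ k) = 0" using py by simp
  qed
  have "a (degree c) = 0" by (rule vandermonde_zero[OF finS injf eqs tS])
  thus False using tS unfolding a_def S_def by simp
qed

end


context bch begin

lemma weight_le: "card {i. coeff p i \<noteq> 0} \<le> Suc (degree p)"
proof -
  have "{i. coeff p i \<noteq> 0} \<subseteq> {..degree p}" using le_degree by auto
  hence "card {i. coeff p i \<noteq> 0} \<le> card {..degree p}" by (intro card_mono) auto
  thus ?thesis by simp
qed

lemma min_dist_eq: "min_dist C = 2 * \<delta> - 1"
proof -
  define D where "D = {hamming_dist c c' | c c'. c \<in> C \<and> c' \<in> C \<and> c \<noteq> c'}"
  have hd: "hamming_dist c c' = card {i. coeff (c - c') i \<noteq> 0}" for c c' :: "'a poly"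
    unfolding hamming_dist_def by simp
  have lower: "2 * \<delta> - 1 \<le> x" if xD: "x \<in> D" for x
  proof -
    obtain c c' where cc: "x = hamming_dist c c'" "c \<in> C" "c' \<in> C" "c \<noteq> c'"
      using xD unfolding D_def by blast
    have "c - c' \<in> C"
    proof -
      have "gen dvd c - c'" using cc unfolding code_char by (auto intro: dvd_diff)
      moreover have "degree (c - c') \<le> max (degree c) (degree c')" by (rule degree_diff_le_max)
      ultimately show ?thesis using cc unfolding code_char by auto
    qed
    moreover have "c - c' \<noteq> 0" using cc by simp
    ultimately have "2 * \<delta> - 1 \<le> card {i. coeff (c - c') i \<noteq> 0}" by (rule bch_bound)
    thus ?thesis using cc(1) hd[of c c'] by simp
  qed
  have genC: "gen \<in> C" unfolding code_char using gen_deg dn d2 by simp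
  have zC: "0 \<in> C" unfolding code_char using n1 by simp
  have "hamming_dist gen 0 \<in> D" unfolding D_def using genC zC gen_nz by blast
  moreover have "hamming_dist gen 0 \<le> 2 * \<delta> - 1"
    using weight_le[of gen] gen_deg d2 hd[of gen 0] by simp
  ultimately have inD: "2 * \<delta> - 1 \<in> D" using lower by (metis le_antisym)
  have finD: "finite D"
  proof -
    have "D \<subseteq> {..n}"
    proof
      fix x assume "x \<in> D"
      then obtain c c' where cc: "x = hamming_dist c c'" "c \<in> C" "c' \<in> C"
        unfolding D_def by blast
      have "degree (c - c') \<le> max (degree c) (degree c')" by (rule degree_diff_le_max)
      hence "degree (c - c') < n" using cc unfolding code_char by auto
      thus "x \<in> {..n}" using weight_le[of "c - c'"] cc(1) hd by simp
    qed
    thus ?thesis using finite_subset by blast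
  qed
  have "Min D = 2 * \<delta> - 1" by (rule Min_eqI[OF finD lower inD])
  thus ?thesis unfolding min_dist_def D_def .
qed

end

theorem proposition9:
  fixes q n \<delta> :: nat and \<phi> :: "'a::{field_gcd,finite} \<Rightarrow> 'b::{field,finite}"
    and \<alpha> \<beta> :: 'b
  assumes "CARD('a) = q" and "odd q"
    and "n = (q + 1) div 2"
    and "2 \<le> \<delta>" and "\<delta> \<le> (q + 3) div 4"
    and "CARD('b) = q ^ mult_ord (2 * n) q"
    and "field_hom \<phi>"
    and "primitive_element \<alpha>"
    and "\<beta> = \<alpha> ^ ((q ^ mult_ord (2 * n) q - 1) div (2 * n))"
  shows "code_dim (negacyclic_BCH \<phi> \<beta> n \<delta>) = n - 2 * (\<delta> - 1)
    \<and> min_dist (negacyclic_BCH \<phi> \<beta> n \<delta>) = 2 * \<delta> - 1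
    \<and> min_dist (negacyclic_BCH \<phi> \<beta> n \<delta>) = n - code_dim (negacyclic_BCH \<phi> \<beta> n \<delta>) + 1"
proof -
  interpret bch q n \<delta> \<phi> \<alpha> \<beta> using assms by unfold_locales
  have d1: "code_dim (negacyclic_BCH \<phi> \<beta> n \<delta>) = n - 2 * (\<delta> - 1)"
    using code_dim_eq gen_deg by simp
  have d2': "min_dist (negacyclic_BCH \<phi> \<beta> n \<delta>) = 2 * \<delta> - 1" by (rule min_dist_eq)
  have "2 * (\<delta> - 1) \<le> n" using dn d2 by simp
  hence "n - (n - 2 * (\<delta> - 1)) + 1 = 2 * \<delta> - 1" using d2 by simp
  thus ?thesis using d1 d2' by simp
qed


end
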